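(* Let $\mathbf v_1,\mathbf v_2,\mathbf v_3,\mathbf v_4$ be decorated Lagrangians in $\mathbf R^{2n}$ such that $\mathbf v_1$ and $\mathbf v_3$ are transverse. Then $$\Lambda_{24}=\Lambda_{23}\Lambda_{13}^{-1}\Lambda_{14}+\Lambda_{21}\Lambda_{31}^{-1}\Lambda_{34}.$$
   Context: $\mathbf R^{2n}$ carries the standard symplectic form $\omega(x,y)={}^T x\begin{pmatrix}0&\mathrm{Id}\\-\mathrm{Id}&0\end{pmatrix}y$. A decorated Lagrangian is a pair $(L,\mathbf v)$ with $L$ a Lagrangian subspace ($n$-dimensional, $\omega|_L=0$) and $\mathbf v=(v_1,\dots,v_n)$ a basis of $L$, denoted by $\mathbf v$. Decorated Lagrangians are transverse if their Lagrangians intersect trivially. The symplectic $\Lambda$-length is $\Lambda_{ij}=(\omega(v_{i,k},v_{j,l}))_{k,l=1,\dots,n}$, an $n\times n$ matrix, invertible iff $\mathbf v_i,\mathbf v_j$ are transverse. *)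

theory Defs
  imports "HOL-Analysis.Analysis"
begin

text \<open>R^{2n} is modelled as pairs (q, p) of vectors in R^n (index type 'n with CARD('n) = n);
  the pair (q, p) corresponds to the column vector with first block q and second block p.\<close>

definition symp :: "((real^'n) \<times> (real^'n)) \<Rightarrow> ((real^'n) \<times> (real^'n)) \<Rightarrow> real" where
  "symp x y = fst x \<bullet> snd y - snd x \<bullet> fst y"

definition lagrangian :: "((real^'n) \<times> (real^'n)) set \<Rightarrow> bool" where
  "lagrangian L \<longleftrightarrow> subspace L \<and> dim L = CARD('n) \<and> (\<forall>x\<in>L. \<forall>y\<in>L. symp x y = 0)"

definition decorated_lagrangian :: "((real^'n) \<times> (real^'n)) set \<Rightarrow> ('n \<Rightarrow> (real^'n) \<times> (real^'n)) \<Rightarrow> bool" where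
  "decorated_lagrangian L v \<longleftrightarrow> lagrangian L \<and> inj v \<and> independent (range v) \<and> span (range v) = L"

definition transverse :: "('n \<Rightarrow> (real^'n) \<times> (real^'n)) \<Rightarrow> ('n \<Rightarrow> (real^'n) \<times> (real^'n)) \<Rightarrow> bool" where
  "transverse v w \<longleftrightarrow> span (range v) \<inter> span (range w) = {0}"

definition Lambda :: "('n \<Rightarrow> (real^'n) \<times> (real^'n)) \<Rightarrow> ('n \<Rightarrow> (real^'n) \<times> (real^'n)) \<Rightarrow> real^'n^'n" where
  "Lambda v w = (\<chi> k l. symp (v k) (w l))"

end

theory Submission
  imports Defs
begin

lemma symp_add_right: "symp x (y + z) = symp x y + symp x z"
  by (simp add: symp_def inner_add_right inner_add_left)

lemma symp_sum_right: "symp x (\<Sum>m\<in>A. c m *\<^sub>R y m) = (\<Sum>m\<in>A. c m * symp x (y m))"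
  by (simp add: symp_def fst_sum snd_sum inner_sum_right inner_sum_left sum_subtractf right_diff_distrib)

lemma symp_sum_left: "symp (\<Sum>m\<in>A. c m *\<^sub>R y m) x = (\<Sum>m\<in>A. c m * symp (y m) x)"
  by (simp add: symp_def fst_sum snd_sum inner_sum_right inner_sum_left sum_subtractf right_diff_distrib)

lemma symp_add_left: "symp (y + z) x = symp y x + symp z x"
  by (simp add: symp_def inner_add_right inner_add_left)

lemma symp_nondeg:
  assumes "\<And>y. symp y x = 0" shows "x = 0"
proof -
  have "symp (0, fst x) x = 0" "symp (snd x, 0) x = 0" using assms by auto
  then have "fst x \<bullet> fst x = 0" "snd x \<bullet> snd x = 0" by (auto simp: symp_def)
  then show ?thesis by (simp add: prod_eq_iff)
qed

lemma span_range_sum: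
  fixes v :: "'n::finite \<Rightarrow> 'a::real_vector"
  assumes "inj v" "x \<in> span (range v)"
  shows "\<exists>c. x = (\<Sum>m\<in>UNIV. c m *\<^sub>R v m)"
proof -
  obtain u where "x = (\<Sum>w\<in>range v. u w *\<^sub>R w)"
    using assms(2) span_finite[of "range v"] by auto
  also have "\<dots> = (\<Sum>m\<in>UNIV. u (v m) *\<^sub>R v m)"
    using sum.reindex[OF assms(1), of "\<lambda>w. u w *\<^sub>R w"] by simp
  finally show ?thesis by (rule exI[of _ "\<lambda>m. u (v m)"])
qed

lemma indep_zero:
  fixes v :: "'n::finite \<Rightarrow> 'a::real_vector"
  assumes "inj v" "independent (range v)" "(\<Sum>m\<in>UNIV. c m *\<^sub>R v m) = 0"
  shows "c = (\<lambda>_. 0)"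
proof -
  have r: "(\<Sum>w\<in>range v. (c \<circ> inv v) w *\<^sub>R w) = (\<Sum>m\<in>UNIV. c m *\<^sub>R v m)"
    using sum.reindex[OF assms(1), of "\<lambda>w. (c \<circ> inv v) w *\<^sub>R w"] assms(1) by simp
  have e: "(\<Sum>w\<in>range v. (c \<circ> inv v) w *\<^sub>R w) = 0" using r assms(3) by simp
  have H: "\<forall>c'. (\<Sum>w\<in>range v. c' w *\<^sub>R w) = 0 \<longrightarrow> (\<forall>w\<in>range v. c' w = 0)"
    using assms(2) real_vector.dependent_finite[of "range v"] by auto
  have "\<forall>w\<in>range v. (c \<circ> inv v) w = 0"
    using spec[OF H, of "c \<circ> inv v"] e by (rule mp)
  then show ?thesis using assms(1) by auto
qed

lemma full_decomp:
  fixes v1 v3 :: "'n \<Rightarrow> (real^'n) \<times> (real^'n)"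
  assumes "decorated_lagrangian L1 v1" "decorated_lagrangian L3 v3" "transverse v1 v3"
  shows "\<exists>a b. x = (\<Sum>m\<in>UNIV. a m *\<^sub>R v1 m) + (\<Sum>m\<in>UNIV. b m *\<^sub>R v3 m)"
proof -
  have L1: "L1 = span (range v1)" "dim L1 = CARD('n)" "subspace L1" "inj v1"
    using assms(1) by (auto simp: decorated_lagrangian_def lagrangian_def)
  have L3: "L3 = span (range v3)" "dim L3 = CARD('n)" "subspace L3" "inj v3"
    using assms(2) by (auto simp: decorated_lagrangian_def lagrangian_def)
  have I: "L1 \<inter> L3 = {0}" using assms(3) L1 L3 by (simp add: transverse_def)
  have S: "span (range v1 \<union> range v3) = {x + y |x y. x \<in> L1 \<and> y \<in> L3}"
    unfolding L1(1) L3(1) by (rule span_Un)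
  have "dim {x + y |x y. x \<in> L1 \<and> y \<in> L3} + dim (L1 \<inter> L3) = dim L1 + dim L3"
    using dim_sums_Int[OF L1(3) L3(3)] .
  then have "dim (span (range v1 \<union> range v3)) = 2 * CARD('n)"
    using S I L1 L3 by simp
  then have "dim (range v1 \<union> range v3) = DIM((real^'n) \<times> (real^'n))"
    by (simp add: dim_span)
  then have "span (range v1 \<union> range v3) = UNIV" using dim_eq_full by blast
  then have "x \<in> {x + y |x y. x \<in> L1 \<and> y \<in> L3}" using S by auto
  then obtain p q where pq: "x = p + q" "p \<in> span (range v1)" "q \<in> span (range v3)"
    using L1 L3 by auto
  obtain a where a: "p = (\<Sum>m\<in>UNIV. a m *\<^sub>R v1 m)" using span_range_sum[OF L1(4) pq(2)] by blast
  obtain b where b: "q = (\<Sum>m\<in>UNIV. b m *\<^sub>R v3 m)" using span_range_sum[OF L3(4) pq(3)] by blast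
  show ?thesis unfolding pq(1) a b by blast
qed

lemma Lambda_invertible:
  fixes v1 v3 :: "'n \<Rightarrow> (real^'n) \<times> (real^'n)"
  assumes "decorated_lagrangian L1 v1" "decorated_lagrangian L3 v3" "transverse v1 v3"
  shows "invertible (Lambda v1 v3)"
proof -
  have L1: "L1 = span (range v1)" "\<forall>x\<in>L1. \<forall>y\<in>L1. symp x y = 0"
    using assms(1) by (auto simp: decorated_lagrangian_def lagrangian_def)
  have L3: "L3 = span (range v3)" "\<forall>x\<in>L3. \<forall>y\<in>L3. symp x y = 0" "inj v3" "independent (range v3)"
    using assms(2) by (auto simp: decorated_lagrangian_def lagrangian_def)
  have "\<forall>c. Lambda v1 v3 *v c = 0 \<longrightarrow> c = 0"
  proof (intro allI impI)
    fix c assume c: "Lambda v1 v3 *v c = 0"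
    define x where "x = (\<Sum>l\<in>UNIV. (c $ l) *\<^sub>R v3 l)"
    have h1: "symp (v1 k) x = 0" for k
    proof -
      have "(Lambda v1 v3 *v c) $ k = 0" using c by simp
      then show ?thesis
        by (simp add: x_def symp_sum_right Lambda_def matrix_vector_mult_def mult.commute)
    qed
    have xin: "x \<in> L3" unfolding x_def L3(1)
      by (intro span_sum span_mul span_base) auto
    have h3: "symp (v3 k) x = 0" for k
    proof -
      have "v3 k \<in> L3" unfolding L3(1) by (rule span_base) simp
      then show ?thesis using L3(2) xin by blast
    qed
    have "symp y x = 0" for y
    proof -
      obtain a b where y: "y = (\<Sum>m\<in>UNIV. a m *\<^sub>R v1 m) + (\<Sum>m\<in>UNIV. b m *\<^sub>R v3 m)"
        using full_decomp[OF assms] by blast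
      show ?thesis unfolding y symp_add_left symp_sum_left using h1 h3 by simp
    qed
    then have "x = 0" by (rule symp_nondeg)
    then have "(\<lambda>l. c $ l) = (\<lambda>_. 0)" using indep_zero[OF L3(3) L3(4), of "\<lambda>l. c $ l"] x_def by simp
    then show "c = 0" by (simp add: vec_eq_iff fun_eq_iff)
  qed
  then have "\<exists>B. B ** Lambda v1 v3 = mat 1" by (simp only: matrix_left_invertible_ker)
  then show ?thesis by (simp only: invertible_left_inverse)
qed

lemma inv_cancel:
  assumes "invertible (A::real^'n^'n)"
  shows "matrix_inv A ** A = mat 1"
proof -
  have "\<exists>A'. A ** A' = mat 1 \<and> A' ** A = mat 1" using assms invertible_def by blast
  then show ?thesis unfolding matrix_inv_def by (rule someI2_ex) auto
qed

theorem proposition3p17: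
  fixes L1 L2 L3 L4 :: "((real^'n) \<times> (real^'n)) set"
    and v1 v2 v3 v4 :: "'n \<Rightarrow> (real^'n) \<times> (real^'n)"
  assumes "decorated_lagrangian L1 v1" "decorated_lagrangian L2 v2"
    and "decorated_lagrangian L3 v3" "decorated_lagrangian L4 v4"
    and "transverse v1 v3"
  shows "Lambda v2 v4 =
           Lambda v2 v3 ** matrix_inv (Lambda v1 v3) ** Lambda v1 v4
         + Lambda v2 v1 ** matrix_inv (Lambda v3 v1) ** Lambda v3 v4"
proof -
  have tr: "transverse v3 v1" using assms(5) by (auto simp: transverse_def)
  have inv13: "invertible (Lambda v1 v3)" by (rule Lambda_invertible[OF assms(1,3,5)])
  have inv31: "invertible (Lambda v3 v1)" by (rule Lambda_invertible[OF assms(3,1) tr])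
  have lag1: "\<forall>x\<in>L1. \<forall>y\<in>L1. symp x y = 0" "L1 = span (range v1)"
    using assms(1) by (auto simp: decorated_lagrangian_def lagrangian_def)
  have lag3: "\<forall>x\<in>L3. \<forall>y\<in>L3. symp x y = 0" "L3 = span (range v3)"
    using assms(3) by (auto simp: decorated_lagrangian_def lagrangian_def)
  have z11: "symp (v1 j) (v1 m) = 0" for j m
    using lag1(1) span_base[of "v1 j" "range v1"] span_base[of "v1 m" "range v1"]
    unfolding lag1(2) by blast
  have z33: "symp (v3 j) (v3 m) = 0" for j m
    using lag3(1) span_base[of "v3 j" "range v3"] span_base[of "v3 m" "range v3"]
    unfolding lag3(2) by blast
  have "\<forall>l. \<exists>ab. v4 l = (\<Sum>m\<in>UNIV. fst ab m *\<^sub>R v1 m) + (\<Sum>m\<in>UNIV. snd ab m *\<^sub>R v3 m)"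
  proof
    fix l
    obtain a b where "v4 l = (\<Sum>m\<in>UNIV. a m *\<^sub>R v1 m) + (\<Sum>m\<in>UNIV. b m *\<^sub>R v3 m)"
      using full_decomp[OF assms(1,3,5)] by blast
    then show "\<exists>ab. v4 l = (\<Sum>m\<in>UNIV. fst ab m *\<^sub>R v1 m) + (\<Sum>m\<in>UNIV. snd ab m *\<^sub>R v3 m)"
      by (intro exI[of _ "(a, b)"]) simp
  qed
  then obtain f0 where f0: "\<forall>l. v4 l = (\<Sum>m\<in>UNIV. fst (f0 l) m *\<^sub>R v1 m) + (\<Sum>m\<in>UNIV. snd (f0 l) m *\<^sub>R v3 m)"
    by (rule choice[THEN exE])
  define f where "f = f0"
  have f: "\<And>l. v4 l = (\<Sum>m\<in>UNIV. fst (f l) m *\<^sub>R v1 m) + (\<Sum>m\<in>UNIV. snd (f l) m *\<^sub>R v3 m)"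
    using f0 unfolding f_def by blast
  define A where "A = (\<chi> m l. fst (f l) m)"
  define B where "B = (\<chi> m l. snd (f l) m)"
  have e14: "Lambda v1 v4 = Lambda v1 v3 ** B"
  proof -
    have "symp (v1 j) (v4 l) = (\<Sum>m\<in>UNIV. symp (v1 j) (v3 m) * snd (f l) m)" for j l
      unfolding f symp_add_right symp_sum_right z11 by (simp add: mult.commute)
    then show ?thesis by (simp add: vec_eq_iff Lambda_def matrix_matrix_mult_def B_def)
  qed
  have e34: "Lambda v3 v4 = Lambda v3 v1 ** A"
  proof -
    have "symp (v3 j) (v4 l) = (\<Sum>m\<in>UNIV. symp (v3 j) (v1 m) * fst (f l) m)" for j l
      unfolding f symp_add_right symp_sum_right z33 by (simp add: mult.commute)
    then show ?thesis by (simp add: vec_eq_iff Lambda_def matrix_matrix_mult_def A_def)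
  qed
  have e24: "Lambda v2 v4 = Lambda v2 v3 ** B + Lambda v2 v1 ** A"
  proof -
    have "symp (v2 j) (v4 l) = (\<Sum>m\<in>UNIV. symp (v2 j) (v3 m) * snd (f l) m)
        + (\<Sum>m\<in>UNIV. symp (v2 j) (v1 m) * fst (f l) m)" for j l
      unfolding f symp_add_right symp_sum_right by (simp add: mult.commute)
    then show ?thesis by (simp add: vec_eq_iff Lambda_def matrix_matrix_mult_def A_def B_def)
  qed
  have "Lambda v2 v3 ** matrix_inv (Lambda v1 v3) ** Lambda v1 v4 = Lambda v2 v3 ** B"
  proof -
    have "Lambda v2 v3 ** matrix_inv (Lambda v1 v3) ** Lambda v1 v4 =
      Lambda v2 v3 ** ((matrix_inv (Lambda v1 v3) ** Lambda v1 v3) ** B)"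
      by (simp only: e14 matrix_mul_assoc)
    then show ?thesis by (simp add: inv_cancel[OF inv13] matrix_mul_lid)
  qed
  moreover have "Lambda v2 v1 ** matrix_inv (Lambda v3 v1) ** Lambda v3 v4 = Lambda v2 v1 ** A"
  proof -
    have "Lambda v2 v1 ** matrix_inv (Lambda v3 v1) ** Lambda v3 v4 =
      Lambda v2 v1 ** ((matrix_inv (Lambda v3 v1) ** Lambda v3 v1) ** A)"
      by (simp only: e34 matrix_mul_assoc)
    then show ?thesis by (simp add: inv_cancel[OF inv31] matrix_mul_lid)
  qed
  ultimately show ?thesis using e24 by simp
qed

end
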